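(* Let $S=[S_1,\ldots,S_m]$ be a sequence of formulas and $I,J$ models. Then $I \equiv_{\emptyset S} J$ holds if and only if $I \equiv_{\emptyset Q} J$ holds for every formula $Q=(B_1\equiv S_1)\wedge\cdots\wedge(B_m\equiv S_m)$ with each $B_i\in\{\mathsf{true},\mathsf{false}\}$.
   Context: Propositional models are truth assignments over a finite set of variables; a formula used where a set of models is expected stands for its set of models. A doxastic state is a sequence $C=[C(0),\ldots,C(m)]$ of nonempty, pairwise disjoint sets of models covering all models; $I\le_C J$ iff $I\in C(i)$, $J\in C(j)$ with $i\le j$; $I\equiv_C J$ iff $I\le_C J$ and $J\le_C I$. The flat doxastic state $\emptyset$ is $[\text{all models}]$. Lexicographic revision: $C\,\mathrm{lex}(A) = [C(0)\cap A,\ldots,C(m)\cap A, C(0)\setminus A,\ldots,C(m)\setminus A]$, empty sets discarded. For a sequence of formulas $S=[S_1,\ldots,S_m]$, $\emptyset S$ denotes $\emptyset$ revised lexicographically by $S_1$, then $S_2$, ..., then $S_m$ ($\emptyset[\,]=\emptyset$); for a formula $Q$, $\emptyset Q$ denotes $\emptyset[Q]$. *)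

theory Defs
  imports Main
begin

datatype 'v form = TrueF | FalseF | Var 'v | Neg "'v form"
  | Conj "'v form" "'v form" | Disj "'v form" "'v form" | Iff "'v form" "'v form"

type_synonym 'v model = "'v \<Rightarrow> bool"

fun sat :: "'v model \<Rightarrow> 'v form \<Rightarrow> bool" where
  "sat I TrueF = True"
| "sat I FalseF = False"
| "sat I (Var x) = I x"
| "sat I (Neg f) = (\<not> sat I f)"
| "sat I (Conj f g) = (sat I f \<and> sat I g)"
| "sat I (Disj f g) = (sat I f \<or> sat I g)"
| "sat I (Iff f g) = (sat I f \<longleftrightarrow> sat I g)"

definition mods :: "'v form \<Rightarrow> 'v model set" where
  "mods f = {I. sat I f}"

type_synonym 'v doxstate = "'v model set list"

definition flat :: "'v doxstate" where
  "flat = [UNIV]"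

definition lex :: "'v doxstate \<Rightarrow> 'v form \<Rightarrow> 'v doxstate" where
  "lex C A = filter (\<lambda>X. X \<noteq> {})
     (map (\<lambda>X. X \<inter> mods A) C @ map (\<lambda>X. X - mods A) C)"

definition emptyrev :: "'v form list \<Rightarrow> 'v doxstate" where
  "emptyrev S = foldl lex flat S"

definition le_ds :: "'v doxstate \<Rightarrow> 'v model \<Rightarrow> 'v model \<Rightarrow> bool" where
  "le_ds C I J \<longleftrightarrow> (\<exists>i j. i < length C \<and> j < length C \<and> I \<in> C ! i \<and> J \<in> C ! j \<and> i \<le> j)"

definition eq_ds :: "'v doxstate \<Rightarrow> 'v model \<Rightarrow> 'v model \<Rightarrow> bool" where
  "eq_ds C I J \<longleftrightarrow> le_ds C I J \<and> le_ds C J I"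

definition boolF :: "bool \<Rightarrow> 'v form" where
  "boolF b = (if b then TrueF else FalseF)"

fun conjIff :: "bool list \<Rightarrow> 'v form list \<Rightarrow> 'v form" where
  "conjIff [] [] = TrueF"
| "conjIff [b] [s] = Iff (boolF b) s"
| "conjIff (b # bs) (s # ss) = Conj (Iff (boolF b) s) (conjIff bs ss)"
| "conjIff _ _ = TrueF"

end

theory Submission
  imports Defs
begin

definition good :: "'v doxstate \<Rightarrow> bool" where
  "good C \<longleftrightarrow> distinct C \<and> (\<forall>X\<in>set C. \<forall>Y\<in>set C. X \<noteq> Y \<longrightarrow> X \<inter> Y = {}) \<and> {} \<notin> set C"

definition sc :: "'v doxstate \<Rightarrow> 'v model \<Rightarrow> 'v model \<Rightarrow> bool" where
  "sc C I J \<longleftrightarrow> (\<exists>X\<in>set C. I \<in> X \<and> J \<in> X)"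

lemma set_lex: "set (lex C A) = ((\<lambda>X. X \<inter> mods A) ` set C \<union> (\<lambda>X. X - mods A) ` set C) - {{}}"
  by (auto simp: lex_def)

lemma sc_lex: "sc (lex C A) I J \<longleftrightarrow> sc C I J \<and> (I \<in> mods A \<longleftrightarrow> J \<in> mods A)"
  unfolding sc_def set_lex by blast

lemma good_lex:
  assumes "good C" shows "good (lex C A)"
proof -
  have dj: "\<forall>X\<in>set C. \<forall>Y\<in>set C. X \<noteq> Y \<longrightarrow> X \<inter> Y = {}" and d: "distinct C"
    using assms by (auto simp: good_def)
  let ?f = "\<lambda>X. X \<inter> mods A" and ?g = "\<lambda>X. X - mods A"
  have e1: "filter (\<lambda>X. X \<noteq> {}) (map ?f C) = map ?f (filter (\<lambda>X. ?f X \<noteq> {}) C)"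
    by (simp add: filter_map comp_def)
  have e2: "filter (\<lambda>X. X \<noteq> {}) (map ?g C) = map ?g (filter (\<lambda>X. ?g X \<noteq> {}) C)"
    by (simp add: filter_map comp_def)
  have i1: "inj_on ?f (set (filter (\<lambda>X. ?f X \<noteq> {}) C))"
    unfolding inj_on_def using dj by auto
  have i2: "inj_on ?g (set (filter (\<lambda>X. ?g X \<noteq> {}) C))"
    unfolding inj_on_def using dj by auto
  have "distinct (lex C A)"
    unfolding lex_def filter_append e1 e2 distinct_append
    using d i1 i2 by (auto simp: distinct_map)
  moreover have "\<forall>X\<in>set (lex C A). \<forall>Y\<in>set (lex C A). X \<noteq> Y \<longrightarrow> X \<inter> Y = {}"
    unfolding set_lex using dj by blast
  moreover have "{} \<notin> set (lex C A)" unfolding set_lex by blast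
  ultimately show ?thesis by (simp add: good_def)
qed

lemma emptyrev_snoc: "emptyrev (S @ [s]) = lex (emptyrev S) s"
  by (simp add: emptyrev_def)

lemma good_emptyrev: "good (emptyrev S)"
proof (induction S rule: rev_induct)
  case Nil then show ?case by (simp add: emptyrev_def flat_def good_def)
next
  case (snoc x xs) then show ?case by (simp add: emptyrev_snoc good_lex)
qed

lemma sc_emptyrev: "sc (emptyrev S) I J \<longleftrightarrow> (\<forall>s\<in>set S. sat I s = sat J s)"
proof (induction S rule: rev_induct)
  case Nil then show ?case by (simp add: emptyrev_def flat_def sc_def)
next
  case (snoc x xs) then show ?case by (auto simp: emptyrev_snoc sc_lex mods_def)
qed

lemma eq_ds_good:
  assumes "good C" shows "eq_ds C I J \<longleftrightarrow> sc C I J"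
proof
  have d: "distinct C" and dj: "\<forall>X\<in>set C. \<forall>Y\<in>set C. X \<noteq> Y \<longrightarrow> X \<inter> Y = {}"
    using assms by (auto simp: good_def)
  have uq: "i = j" if "i < length C" "j < length C" "K \<in> C ! i" "K \<in> C ! j" for i j K
  proof -
    have "C ! i = C ! j" using dj that nth_mem by blast
    then show ?thesis using d that nth_eq_iff_index_eq by blast
  qed
  assume "eq_ds C I J"
  then obtain i j i' j' where h: "i < length C" "j < length C" "I \<in> C ! i" "J \<in> C ! j" "i \<le> j"
    "i' < length C" "j' < length C" "J \<in> C ! j'" "I \<in> C ! i'" "j' \<le> i'"
    unfolding eq_ds_def le_ds_def by blast
  then have "i = i'" "j = j'" using uq by blast+
  then have "i = j" using h by simp
  then show "sc C I J" using h nth_mem unfolding sc_def by blast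
next
  assume "sc C I J"
  then obtain X where "X \<in> set C" "I \<in> X" "J \<in> X" unfolding sc_def by blast
  then obtain i where "i < length C" "C ! i = X" by (metis in_set_conv_nth)
  then show "eq_ds C I J" unfolding eq_ds_def le_ds_def using \<open>I \<in> X\<close> \<open>J \<in> X\<close> by blast
qed

lemma main_char: "eq_ds (emptyrev S) I J \<longleftrightarrow> (\<forall>s\<in>set S. sat I s = sat J s)"
  using eq_ds_good[OF good_emptyrev] sc_emptyrev by blast

lemma sat_boolF[simp]: "sat I (boolF b) = b"
  by (simp add: boolF_def)

lemma sat_conjIff:
  "length Bs = length S \<Longrightarrow> sat I (conjIff Bs S) \<longleftrightarrow> (\<forall>k<length S. Bs ! k = sat I (S ! k))"
proof (induction S arbitrary: Bs)
  case Nil then show ?case by simp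
next
  case (Cons s ss)
  then obtain b bs where B: "Bs = b # bs" "length bs = length ss" by (cases Bs) auto
  show ?case
  proof (cases ss)
    case Nil then show ?thesis using B by (cases bs) auto
  next
    case (Cons t ts)
    then obtain c cs where "bs = c # cs" using B by (cases bs) auto
    then have "sat I (conjIff Bs (s # ss)) = ((b = sat I s) \<and> sat I (conjIff bs ss))"
      using B Cons by simp
    then show ?thesis using Cons.IH[OF B(2)] B by (auto simp: less_Suc_eq_0_disj nth_Cons')
  qed
qed

theorem mainTheorem5:
  fixes S :: "('v::finite) form list" and I J :: "'v model"
  shows "eq_ds (emptyrev S) I J \<longleftrightarrow>
    (\<forall>Bs. length Bs = length S \<longrightarrow> eq_ds (emptyrev [conjIff Bs S]) I J)"
proof
  assume "eq_ds (emptyrev S) I J"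
  then have "\<forall>s\<in>set S. sat I s = sat J s" by (simp add: main_char)
  then have "\<forall>k<length S. sat I (S ! k) = sat J (S ! k)" by simp
  then show "\<forall>Bs. length Bs = length S \<longrightarrow> eq_ds (emptyrev [conjIff Bs S]) I J"
    by (simp add: main_char sat_conjIff)
next
  assume a: "\<forall>Bs. length Bs = length S \<longrightarrow> eq_ds (emptyrev [conjIff Bs S]) I J"
  let ?B = "map (\<lambda>s. sat I s) S"
  have "sat I (conjIff ?B S) = sat J (conjIff ?B S)"
    using a[rule_format, of ?B] by (simp add: main_char)
  moreover have "sat I (conjIff ?B S)" by (simp add: sat_conjIff)
  ultimately have "\<forall>k<length S. sat I (S ! k) = sat J (S ! k)" by (simp add: sat_conjIff)
  then have "\<forall>s\<in>set S. sat I s = sat J s" by (metis in_set_conv_nth)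
  then show "eq_ds (emptyrev S) I J" by (simp add: main_char)
qed

end
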